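(* Let $\Omega\subset\mathbb{R}^N$ be a bounded domain with Lipschitz boundary, $s\in(0,1)$ and $p\in(1,+\infty)$. For every $\delta>0$ the spaces $\mathcal{X}_0^{\infty,s,p}(\Omega)$ and $\mathcal{X}_0^{\delta,s,p}(\Omega)$ are isomorphic (via restriction to $\Omega_\delta$ and extension by zero outside $\Omega_\delta$). In particular, for every $\delta>0$ there exists a constant $C(\delta)>1$ such that $$[v]_{W^{\delta,s,p}(\Omega_{\delta})}\leq[v]_{W^{s,p}(\mathbb{R}^N)}\leq C(\delta)\, [v]_{W^{\delta,s,p}(\Omega_{\delta})}$$ for every measurable $v:\mathbb{R}^N\to\mathbb{R}$ vanishing a.e. outside $\Omega$ (the quantities being finite or infinite simultaneously). Moreover, $C(\delta)\to 1$ as $\delta\to+\infty$.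
   Context: For $\delta>0$ let $\partial_\delta\Omega=\{y\in\mathbb{R}^N\setminus\Omega: |x-y|<\delta \text{ for some } x\in\Omega\}$ and $\Omega_\delta=\Omega\cup\partial_\delta\Omega$. Define $[u]_{W^{\delta,s,p}(\Omega_{\delta})}^p=\int_{\Omega_{\delta}}\int_{\Omega_{\delta}\cap B(x,\delta)}\frac{|u(x)-u(y)|^p}{|x-y|^{N+sp}}\,dy\,dx$ and $[u]_{W^{s,p}(\mathbb{R}^N)}^p=\int_{\mathbb{R}^N}\int_{\mathbb{R}^N}\frac{|u(x)-u(y)|^p}{|x-y|^{N+sp}}\,dy\,dx$. Let $\mathcal{X}_0^{\delta,s,p}(\Omega)=\{u\in L^p(\Omega_\delta): [u]_{W^{\delta,s,p}(\Omega_{\delta})}<+\infty,\ u=0 \text{ a.e. in } \partial_\delta\Omega\}$ and $\mathcal{X}_0^{\infty,s,p}(\Omega)=\{u:\mathbb{R}^N\to\mathbb{R}:\ u\in L^p(\Omega),\ [u]_{W^{s,p}(\mathbb{R}^N)}<+\infty,\ u=0 \text{ a.e. in } \mathbb{R}^N\setminus\Omega\}$, each normed by the corresponding seminorm. *)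

theory Defs
  imports "HOL-Analysis.Analysis"
begin

definition lipschitz_domain :: "'a::euclidean_space set \<Rightarrow> bool" where
  "lipschitz_domain \<Omega> \<longleftrightarrow> bounded \<Omega> \<and> open \<Omega> \<and> connected \<Omega> \<and> \<Omega> \<noteq> {} \<and>
     (\<forall>x0\<in>frontier \<Omega>. \<exists>r>0. \<exists>e::'a. norm e = 1 \<and>
        (\<exists>(g::'a \<Rightarrow> real) L. L-lipschitz_on UNIV g \<and>
           (\<forall>x\<in>ball x0 r. x \<in> \<Omega> \<longleftrightarrow> x \<bullet> e > g (x - (x \<bullet> e) *\<^sub>R e))))"

definition nl_collar :: "real \<Rightarrow> 'a::metric_space set \<Rightarrow> 'a set" where
  "nl_collar \<delta> \<Omega> = {y. y \<notin> \<Omega> \<and> (\<exists>x\<in>\<Omega>. dist x y < \<delta>)}"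

definition nl_ext :: "real \<Rightarrow> 'a::metric_space set \<Rightarrow> 'a set" where
  "nl_ext \<delta> \<Omega> = \<Omega> \<union> nl_collar \<delta> \<Omega>"

definition seminorm_delta_p :: "real \<Rightarrow> real \<Rightarrow> real \<Rightarrow> 'a::euclidean_space set \<Rightarrow> ('a \<Rightarrow> real) \<Rightarrow> ennreal" where
  "seminorm_delta_p \<delta> s p \<Omega> u =
     (\<integral>\<^sup>+ x\<in>nl_ext \<delta> \<Omega>. (\<integral>\<^sup>+ y\<in>nl_ext \<delta> \<Omega> \<inter> ball x \<delta>.
        ennreal (\<bar>u x - u y\<bar> powr p / dist x y powr (real DIM('a) + s * p)) \<partial>lebesgue) \<partial>lebesgue)"

definition seminorm_full_p :: "real \<Rightarrow> real \<Rightarrow> ('a::euclidean_space \<Rightarrow> real) \<Rightarrow> ennreal" where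
  "seminorm_full_p s p u =
     (\<integral>\<^sup>+ x. (\<integral>\<^sup>+ y.
        ennreal (\<bar>u x - u y\<bar> powr p / dist x y powr (real DIM('a) + s * p)) \<partial>lebesgue) \<partial>lebesgue)"

definition X0_delta :: "real \<Rightarrow> real \<Rightarrow> real \<Rightarrow> 'a::euclidean_space set \<Rightarrow> ('a \<Rightarrow> real) set" where
  "X0_delta \<delta> s p \<Omega> = {u. u \<in> borel_measurable lebesgue \<and>
      (\<integral>\<^sup>+ x\<in>nl_ext \<delta> \<Omega>. ennreal (\<bar>u x\<bar> powr p) \<partial>lebesgue) < \<infinity> \<and>
      seminorm_delta_p \<delta> s p \<Omega> u < \<infinity> \<and>
      (AE x in lebesgue. x \<in> nl_collar \<delta> \<Omega> \<longrightarrow> u x = 0)}"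

definition X0_infty :: "real \<Rightarrow> real \<Rightarrow> 'a::euclidean_space set \<Rightarrow> ('a \<Rightarrow> real) set" where
  "X0_infty s p \<Omega> = {u. u \<in> borel_measurable lebesgue \<and>
      (\<integral>\<^sup>+ x\<in>\<Omega>. ennreal (\<bar>u x\<bar> powr p) \<partial>lebesgue) < \<infinity> \<and>
      seminorm_full_p s p u < \<infinity> \<and>
      (AE x in lebesgue. x \<notin> \<Omega> \<longrightarrow> u x = 0)}"

definition zero_ext :: "real \<Rightarrow> 'a::metric_space set \<Rightarrow> ('a \<Rightarrow> real) \<Rightarrow> 'a \<Rightarrow> real" where
  "zero_ext \<delta> \<Omega> u = (\<lambda>x. if x \<in> nl_ext \<delta> \<Omega> then u x else 0)"

end

theory Submission
  imports Defs
begin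
lemma sf_leb: "sigma_finite_measure (lebesgue :: 'a::euclidean_space measure)"
proof
  from lborel.sigma_finite_countable obtain A :: "'a set set" where
    A: "countable A" "A \<subseteq> sets lborel" "\<Union>A = space lborel" "\<forall>a\<in>A. emeasure lborel a \<noteq> \<infinity>" by blast
  show "\<exists>A::'a set set. countable A \<and> A \<subseteq> sets lebesgue \<and> \<Union> A = space lebesgue \<and> (\<forall>a\<in>A. emeasure lebesgue a \<noteq> \<infinity>)"
    apply (rule exI[of _ A]) using A by (auto)
qed
interpretation leb2: pair_sigma_finite "lebesgue :: 'a::euclidean_space measure" "lebesgue :: 'a measure"
  by (intro pair_sigma_finite.intro sf_leb)
lemma id_leb[measurable]: "(\<lambda>x. x) \<in> borel_measurable (lebesgue :: 'a::euclidean_space measure)"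
  by (rule measurable_completion) simp
lemma fst_leb[measurable]: "fst \<in> borel_measurable ((lebesgue :: 'a::euclidean_space measure) \<Otimes>\<^sub>M (lebesgue :: 'b::euclidean_space measure))"
  using measurable_compose[OF measurable_fst id_leb] by simp
lemma snd_leb[measurable]: "snd \<in> borel_measurable ((lebesgue :: 'a::euclidean_space measure) \<Otimes>\<^sub>M (lebesgue :: 'b::euclidean_space measure))"
  using measurable_compose[OF measurable_snd id_leb] by simp
lemma emeasure_leb_ball: "r \<ge> 0 \<Longrightarrow> emeasure lebesgue (ball (c::'a::euclidean_space) r) = ennreal (unit_ball_vol (DIM('a)) * r ^ DIM('a))"
  by (simp add: emeasure_ball)

lemma leb_Collect: "Measurable.pred lebesgue P \<Longrightarrow> {y. P y} \<in> sets (lebesgue::'a::euclidean_space measure)"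
  by (simp add: pred_def)

lemma powr_tri:
  fixes a b p :: real assumes p: "p > 0"
  shows "\<bar>a + b\<bar> powr p \<le> 2 powr p * (\<bar>a\<bar> powr p + \<bar>b\<bar> powr p)"
proof -
  have "\<bar>a + b\<bar> powr p \<le> (2 * max \<bar>a\<bar> \<bar>b\<bar>) powr p"
    by (rule powr_mono2) (use p in auto)
  also have "\<dots> = 2 powr p * max \<bar>a\<bar> \<bar>b\<bar> powr p" by (simp add: powr_mult)
  also have "max \<bar>a\<bar> \<bar>b\<bar> powr p \<le> \<bar>a\<bar> powr p + \<bar>b\<bar> powr p"
    by (cases "\<bar>a\<bar> \<le> \<bar>b\<bar>") (auto simp: max_def)
  finally show ?thesis by simp
qed

lemma shell_alg:
  fixes r q vol :: real and k N :: nat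
  assumes r: "r > 0"
  shows "(r*2^k) powr (-(real N + q)) * (vol * (r*2^(Suc k))^N) = vol * 2^N * r powr (-q) * (2 powr (-q))^k"
proof -
  define z where "z = r*2^k"
  have z: "z > 0" using r by (simp add: z_def)
  have a: "(r*2^(Suc k))^N = 2^N * z^N" by (simp add: z_def power_mult_distrib)
  have b: "z powr (-(real N + q)) = z powr (- real N) * z powr (-q)"
    by (simp add: powr_add[symmetric])
  have c: "z powr (- real N) = 1 / z^N"
    using z by (simp add: powr_minus powr_realpow divide_inverse)
  have d: "z powr (-q) = r powr (-q) * (2 powr (-q))^k"
    using r by (simp add: z_def powr_mult powr_realpow[symmetric] powr_powr powr_power mult.commute)
  show ?thesis unfolding z_def[symmetric] a b c d using z by (simp add: field_simps)
qed

lemma shell_bound: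
  fixes x :: "'a::euclidean_space"
  assumes r: "r > 0" and q: "q > 0"
  shows "(\<integral>\<^sup>+y. indicator {y. r \<le> dist x y} y * ennreal (1 / dist x y powr (real DIM('a) + q)) \<partial>lebesgue)
     \<le> ennreal (unit_ball_vol DIM('a) * 2^DIM('a) * r powr (-q) / (1 - 2 powr (-q)))"
proof -
  let ?N = "DIM('a)"
  let ?g = "\<lambda>y. ennreal (1 / dist x y powr (real ?N + q))"
  define t where "t = (2::real) powr (-q)"
  have t: "0 \<le> t" "t < 1" using q by (auto simp: t_def intro!: powr_less_one)
  define c0 where "c0 = unit_ball_vol ?N * 2^?N * r powr (-q)"
  have c0: "c0 \<ge> 0" by (simp add: c0_def)
  define A where "A k = {y. r*2^k \<le> dist x y \<and> dist x y < r*2^(Suc k)}" for k :: nat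
  have Am[measurable]: "A k \<in> sets lebesgue" for k unfolding A_def by (rule leb_Collect) measurable
  have lt: "A m \<inter> A n = {}" if "m < n" for m n
  proof -
    have "(2::real) * 2^m \<le> 2^n" using that
      by (metis power_Suc power_increasing_iff Suc_leI one_less_numeral_iff semiring_norm(76))
    then have "r * 2^(Suc m) \<le> r * 2^n" using r by simp
    then show ?thesis by (auto simp: A_def)
  qed
  have disj: "disjoint_family A"
    unfolding disjoint_family_on_def
  proof (intro ballI impI)
    fix m n :: nat assume "m \<noteq> n"
    then show "A m \<inter> A n = {}"
      using lt[of m n] lt[of n m] by (cases "m < n") (auto simp: Int_commute)
  qed
  have cover: "indicator {y. r \<le> dist x y} y = (\<Sum>k. indicator (A k) y :: ennreal)" for y
  proof -
    have "{y. r \<le> dist x y} = \<Union>(range A)"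
    proof (intro equalityI subsetI)
      fix y assume "y \<in> {y. r \<le> dist x y}"
      then have ry: "r \<le> dist x y" by simp
      obtain n where n: "dist x y / r < 2^n" using real_arch_pow[of 2 "dist x y / r"] by auto
      have "dist x y < r * 2^n" using n r by (simp add: field_simps)
      moreover have "r * 2^n \<le> r * 2^(Suc n)" using r by simp
      ultimately have ex: "\<exists>n. dist x y < r * 2^(Suc n)" by (intro exI[of _ n]) linarith
      define k where "k = (LEAST n. dist x y < r * 2^(Suc n))"
      have k1: "dist x y < r * 2^(Suc k)" unfolding k_def by (rule LeastI_ex[OF ex])
      have k2: "r * 2^k \<le> dist x y"
      proof (cases k)
        case 0 then show ?thesis using ry by simp
      next
        case (Suc m)
        then have "\<not> dist x y < r * 2^(Suc m)" using not_less_Least[of m "\<lambda>n. dist x y < r * 2^(Suc n)"] k_def by auto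
        then show ?thesis using Suc by simp
      qed
      show "y \<in> \<Union>(range A)" using k1 k2 by (auto simp: A_def)
    next
      fix y assume "y \<in> \<Union>(range A)"
      then obtain k where "r * 2^k \<le> dist x y" by (auto simp: A_def)
      moreover have "r \<le> r * 2^k" using r by simp
      ultimately show "y \<in> {y. r \<le> dist x y}" by simp
    qed
    then show ?thesis by (simp add: suminf_indicator[OF disj])
  qed
  have trm: "(\<integral>\<^sup>+y. indicator (A k) y * ?g y \<partial>lebesgue) \<le> ennreal (c0 * t^k)" for k
  proof -
    have "(\<integral>\<^sup>+y. indicator (A k) y * ?g y \<partial>lebesgue) \<le> (\<integral>\<^sup>+y. indicator (A k) y * ennreal ((r*2^k) powr (-(real ?N + q))) \<partial>lebesgue)"
    proof (intro nn_integral_mono)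
      fix y
      show "indicator (A k) y * ?g y \<le> indicator (A k) y * ennreal ((r*2^k) powr (-(real ?N + q)))"
      proof (cases "y \<in> A k")
        case True
        then have d: "r*2^k \<le> dist x y" by (simp add: A_def)
        have pos: "0 < r*2^k" using r by simp
        have "1 / dist x y powr (real ?N + q) = dist x y powr (-(real ?N + q))"
          by (rule powr_minus_divide[symmetric])
        also have "\<dots> \<le> (r*2^k) powr (-(real ?N + q))"
          by (rule powr_mono2') (use q pos d in auto)
        finally show ?thesis using True by (simp add: ennreal_leI)
      qed simp
    qed
    also have "\<dots> = ennreal ((r*2^k) powr (-(real ?N + q))) * emeasure lebesgue (A k)"
      by (subst mult.commute) (simp add: nn_integral_cmult_indicator)
    also have "\<dots> \<le> ennreal ((r*2^k) powr (-(real ?N + q))) * emeasure lebesgue (ball x (r*2^(Suc k)))"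
      by (intro mult_left_mono emeasure_mono) (auto simp: A_def)
    also have "\<dots> = ennreal ((r*2^k) powr (-(real ?N + q))) * ennreal (unit_ball_vol ?N * (r*2^(Suc k))^?N)"
      using r by (subst emeasure_leb_ball) auto
    also have "\<dots> = ennreal ((r*2^k) powr (-(real ?N + q)) * (unit_ball_vol ?N * (r*2^(Suc k))^?N))"
      by (rule ennreal_mult[symmetric]) (use r in auto)
    also have "\<dots> = ennreal (c0 * t^k)"
      by (simp only: shell_alg[OF r] c0_def t_def)
    finally show ?thesis .
  qed
  have "(\<integral>\<^sup>+y. indicator {y. r \<le> dist x y} y * ?g y \<partial>lebesgue) = (\<integral>\<^sup>+y. (\<Sum>k. indicator (A k) y * ?g y) \<partial>lebesgue)"
    by (simp add: cover ennreal_suminf_multc)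
  also have "\<dots> = (\<Sum>k. \<integral>\<^sup>+y. indicator (A k) y * ?g y \<partial>lebesgue)"
    by (rule nn_integral_suminf) measurable
  also have "\<dots> \<le> (\<Sum>k. ennreal (c0 * t^k))"
    by (intro suminf_le trm) auto
  also have "\<dots> = ennreal (c0 / (1 - t))"
  proof (rule suminf_ennreal_eq)
    show "0 \<le> c0 * t^k" for k using t c0 by simp
    have "(\<lambda>k. c0 * t^k) sums (c0 * (1 / (1 - t)))"
      by (intro sums_mult geometric_sums) (use t in auto)
    then show "(\<lambda>k. c0 * t^k) sums (c0 / (1 - t))" by simp
  qed
  finally show ?thesis by (simp add: c0_def t_def)
qed

definition shc :: "nat \<Rightarrow> real \<Rightarrow> real \<Rightarrow> real" where
  "shc n q r = unit_ball_vol n * 2^n * r powr (-q) / (1 - 2 powr (-q))"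

lemma shc_nonneg: "q > 0 \<Longrightarrow> shc n q r \<ge> 0"
  unfolding shc_def using powr_less_one[of 2 "-q"] by (intro divide_nonneg_nonneg) auto

lemma shell_bound':
  fixes x :: "'a::euclidean_space"
  assumes r: "r > 0" and q: "q > 0"
  shows "(\<integral>\<^sup>+y. indicator {y. r \<le> dist x y} y * ennreal (1 / dist x y powr (real DIM('a) + q)) \<partial>lebesgue)
     \<le> ennreal (shc DIM('a) q r)"
  using shell_bound[OF r q, of x] by (simp add: shc_def)

lemma open_leb: "open S \<Longrightarrow> S \<in> sets (lebesgue :: 'a::euclidean_space measure)"
  by simp

lemma ext_eq: "\<delta> > 0 \<Longrightarrow> nl_ext \<delta> \<Omega> = (\<Union>x\<in>\<Omega>. ball x \<delta>)"
  unfolding nl_ext_def nl_collar_def by (auto simp: mem_ball)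

lemma ext_open: "\<delta> > 0 \<Longrightarrow> open (nl_ext \<delta> \<Omega>)"
  by (simp add: ext_eq open_UN)

lemma ext_leb: "\<delta> > 0 \<Longrightarrow> nl_ext \<delta> (\<Omega>::'a::euclidean_space set) \<in> sets lebesgue"
  by (rule open_leb[OF ext_open])

lemma ext_mem: "\<delta> > 0 \<Longrightarrow> x \<in> \<Omega> \<Longrightarrow> dist x y < \<delta> \<Longrightarrow> y \<in> nl_ext \<delta> \<Omega>"
  by (auto simp: ext_eq mem_ball)

lemma sub_ext: "\<delta> > 0 \<Longrightarrow> \<Omega> \<subseteq> nl_ext \<delta> \<Omega>"
  by (auto simp: nl_ext_def)


lemma full_le:
  fixes v :: "'a::euclidean_space \<Rightarrow> real" and \<Omega> :: "'a set"
  assumes vm[measurable]: "v \<in> borel_measurable lebesgue"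
    and v0: "AE x in lebesgue. x \<notin> \<Omega> \<longrightarrow> v x = 0"
    and Om[measurable]: "\<Omega> \<in> sets lebesgue" and \<delta>: "\<delta> > 0" and p: "p > 0" and q: "s*p > 0"
  shows "seminorm_full_p s p v \<le> seminorm_delta_p \<delta> s p \<Omega> v +
     ennreal (2 powr p * 2 * shc DIM('a) (s*p) \<delta>) * (\<integral>\<^sup>+x\<in>\<Omega>. ennreal (\<bar>v x\<bar> powr p) \<partial>lebesgue)"
proof -
  define \<alpha> where "\<alpha> = real DIM('a) + s*p"
  define E where "E = nl_ext \<delta> \<Omega>"
  have Em[measurable]: "E \<in> sets lebesgue" unfolding E_def by (rule ext_leb[OF \<delta>])
  define f where "f x y = ennreal (\<bar>v x - v y\<bar> powr p / dist x y powr \<alpha>)" for x y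
  define g1 where "g1 x y = (if x \<in> E \<and> y \<in> E \<and> dist x y < \<delta> then f x y else 0)" for x y
  define hk where "hk (x::'a) (y::'a) = (indicator {y. \<delta> \<le> dist x y} y * ennreal (1 / dist x y powr \<alpha>) :: ennreal)" for x y
  define uu where "uu x = (indicator \<Omega> x * ennreal (\<bar>v x\<bar> powr p) :: ennreal)" for x
  define M where "M = (2::real) powr p"
  define K where "K = shc DIM('a) (s*p) \<delta>"
  have K0: "K \<ge> 0" unfolding K_def using q by (rule shc_nonneg)
  have M0: "M \<ge> 0" by (simp add: M_def)
  have fm[measurable]: "(\<lambda>(x,y). f x y) \<in> borel_measurable (lebesgue \<Otimes>\<^sub>M lebesgue)"
    unfolding f_def by measurable
  have g1m[measurable]: "(\<lambda>(x,y). g1 x y) \<in> borel_measurable (lebesgue \<Otimes>\<^sub>M lebesgue)"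
    unfolding g1_def f_def by measurable
  have hkm[measurable]: "(\<lambda>(x,y). hk x y) \<in> borel_measurable (lebesgue \<Otimes>\<^sub>M lebesgue)"
    unfolding hk_def by measurable
  have uum[measurable]: "uu \<in> borel_measurable lebesgue"
    unfolding uu_def by measurable
  have pw: "f x y \<le> g1 x y + ennreal M * (uu x * hk x y) + ennreal M * (uu y * hk x y)"
    if Px: "x \<notin> \<Omega> \<longrightarrow> v x = 0" and Py: "y \<notin> \<Omega> \<longrightarrow> v y = 0" for x y
  proof (cases "dist x y < \<delta>")
    case True
    show ?thesis
    proof (cases "x \<in> E \<and> y \<in> E")
      case True
      then have "g1 x y = f x y" using \<open>dist x y < \<delta>\<close> by (simp add: g1_def mem_ball)
      then show ?thesis by (simp add: add.assoc add_increasing2)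
    next
      case False
      have "v x = 0 \<and> v y = 0"
      proof (cases "x \<in> E")
        case True
        then have "y \<notin> E" using False by simp
        then have "y \<notin> \<Omega>" "x \<notin> \<Omega>" using ext_mem[OF \<delta>, of y \<Omega> x] ext_mem[OF \<delta>, of x \<Omega> y] \<open>dist x y < \<delta>\<close> sub_ext[OF \<delta>, of \<Omega>]
          by (auto simp: E_def dist_commute)
        then show ?thesis using Px Py by simp
      next
        case False
        then have "y \<notin> \<Omega>" "x \<notin> \<Omega>" using ext_mem[OF \<delta>, of y \<Omega> x] ext_mem[OF \<delta>, of x \<Omega> y] \<open>dist x y < \<delta>\<close> sub_ext[OF \<delta>, of \<Omega>]
          by (auto simp: E_def dist_commute)
        then show ?thesis using Px Py by simp
      qed
      then have "f x y = 0" using p by (simp add: f_def)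
      then show ?thesis by simp
    qed
  next
    case False
    then have d: "\<delta> \<le> dist x y" by simp
    define k where "k = 1 / dist x y powr \<alpha>"
    have k0: "k \<ge> 0" by (simp add: k_def)
    have hk: "hk x y = ennreal k" using d by (simp add: hk_def k_def)
    have ux: "\<bar>v x\<bar> powr p = indicator \<Omega> x * \<bar>v x\<bar> powr p" using Px p by (cases "x \<in> \<Omega>") auto
    have uy: "\<bar>v y\<bar> powr p = indicator \<Omega> y * \<bar>v y\<bar> powr p" using Py p by (cases "y \<in> \<Omega>") auto
    have "\<bar>v x - v y\<bar> powr p / dist x y powr \<alpha> = \<bar>v x + (- v y)\<bar> powr p * k"
      by (simp add: k_def)
    also have "\<dots> \<le> M * (\<bar>v x\<bar> powr p + \<bar>- v y\<bar> powr p) * k"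
      unfolding M_def by (rule mult_right_mono[OF powr_tri[OF p] k0])
    also have "\<dots> = M * (\<bar>v x\<bar> powr p * k) + M * (\<bar>v y\<bar> powr p * k)"
      by (simp add: algebra_simps)
    also have "\<dots> = M * ((indicator \<Omega> x * \<bar>v x\<bar> powr p) * k) + M * ((indicator \<Omega> y * \<bar>v y\<bar> powr p) * k)"
      by (simp only: ux[symmetric] uy[symmetric])
    finally have le: "\<bar>v x - v y\<bar> powr p / dist x y powr \<alpha> \<le> \<dots>" .
    have "f x y \<le> ennreal (M * ((indicator \<Omega> x * \<bar>v x\<bar> powr p) * k) + M * ((indicator \<Omega> y * \<bar>v y\<bar> powr p) * k))"
      unfolding f_def by (rule ennreal_leI[OF le])
    also have "\<dots> = ennreal M * (uu x * hk x y) + ennreal M * (uu y * hk x y)"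
      using M0 k0 unfolding hk uu_def
      by (simp add: ennreal_plus ennreal_mult indicator_def)
    finally show ?thesis by (simp add: add.assoc add_increasing)
  qed
  have "seminorm_full_p s p v = (\<integral>\<^sup>+x. (\<integral>\<^sup>+y. f x y \<partial>lebesgue) \<partial>lebesgue)"
    by (simp add: seminorm_full_p_def f_def \<alpha>_def)
  also have "\<dots> \<le> (\<integral>\<^sup>+x. (\<integral>\<^sup>+y. g1 x y + ennreal M * (uu x * hk x y) + ennreal M * (uu y * hk x y) \<partial>lebesgue) \<partial>lebesgue)"
  proof (rule nn_integral_mono_AE)
    show "AE x in lebesgue. (\<integral>\<^sup>+y. f x y \<partial>lebesgue) \<le> (\<integral>\<^sup>+y. g1 x y + ennreal M * (uu x * hk x y) + ennreal M * (uu y * hk x y) \<partial>lebesgue)"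
      using v0
    proof eventually_elim
      case (elim x)
      note Px = elim
      show ?case
        by (rule nn_integral_mono_AE, rule AE_mp[OF v0], rule AE_I2, rule impI, rule pw[OF Px])
    qed
  qed
  also have "\<dots> = (\<integral>\<^sup>+x. (\<integral>\<^sup>+y. g1 x y \<partial>lebesgue) + ennreal M * (uu x * (\<integral>\<^sup>+y. hk x y \<partial>lebesgue)) + ennreal M * (\<integral>\<^sup>+y. uu y * hk x y \<partial>lebesgue) \<partial>lebesgue)"
    by (intro nn_integral_cong) (simp add: nn_integral_add nn_integral_cmult)
  also have "\<dots> = (\<integral>\<^sup>+x. (\<integral>\<^sup>+y. g1 x y \<partial>lebesgue) \<partial>lebesgue) + ennreal M * (\<integral>\<^sup>+x. uu x * (\<integral>\<^sup>+y. hk x y \<partial>lebesgue) \<partial>lebesgue) + ennreal M * (\<integral>\<^sup>+x. (\<integral>\<^sup>+y. uu y * hk x y \<partial>lebesgue) \<partial>lebesgue)"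
    by (simp add: nn_integral_add nn_integral_cmult)
  also have "(\<integral>\<^sup>+x. (\<integral>\<^sup>+y. g1 x y \<partial>lebesgue) \<partial>lebesgue) = seminorm_delta_p \<delta> s p \<Omega> v"
    unfolding seminorm_delta_p_def g1_def E_def[symmetric] f_def \<alpha>_def
    by (intro nn_integral_cong) (auto simp: nn_integral_multc indicator_def mem_ball intro!: nn_integral_cong)
  finally have main: "seminorm_full_p s p v \<le> seminorm_delta_p \<delta> s p \<Omega> v + ennreal M * (\<integral>\<^sup>+x. uu x * (\<integral>\<^sup>+y. hk x y \<partial>lebesgue) \<partial>lebesgue) + ennreal M * (\<integral>\<^sup>+x. (\<integral>\<^sup>+y. uu y * hk x y \<partial>lebesgue) \<partial>lebesgue)" .
  have X: "(\<integral>\<^sup>+x. uu x * ennreal K \<partial>lebesgue) = ennreal K * (\<integral>\<^sup>+x\<in>\<Omega>. ennreal (\<bar>v x\<bar> powr p) \<partial>lebesgue)"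
    by (simp add: uu_def nn_integral_multc nn_integral_cmult mult.commute mult.left_commute)
  have A1: "(\<integral>\<^sup>+x. uu x * (\<integral>\<^sup>+y. hk x y \<partial>lebesgue) \<partial>lebesgue) \<le> (\<integral>\<^sup>+x. uu x * ennreal K \<partial>lebesgue)"
    by (intro nn_integral_mono mult_left_mono)
       (auto simp: hk_def \<alpha>_def K_def intro!: shell_bound'[OF \<delta> q])
  have "(\<integral>\<^sup>+x. (\<integral>\<^sup>+y. uu y * hk x y \<partial>lebesgue) \<partial>lebesgue) = (\<integral>\<^sup>+y. (\<integral>\<^sup>+x. uu y * hk x y \<partial>lebesgue) \<partial>lebesgue)"
    by (rule leb2.Fubini'[symmetric]) measurable
  also have "\<dots> = (\<integral>\<^sup>+y. uu y * (\<integral>\<^sup>+x. hk y x \<partial>lebesgue) \<partial>lebesgue)"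
    by (intro nn_integral_cong) (auto simp: nn_integral_cmult hk_def dist_commute indicator_def intro!: nn_integral_cong)
  also have "\<dots> \<le> (\<integral>\<^sup>+x. uu x * ennreal K \<partial>lebesgue)"
    by (intro nn_integral_mono mult_left_mono)
       (auto simp: hk_def \<alpha>_def K_def intro!: shell_bound'[OF \<delta> q])
  finally have A2: "(\<integral>\<^sup>+x. (\<integral>\<^sup>+y. uu y * hk x y \<partial>lebesgue) \<partial>lebesgue) \<le> (\<integral>\<^sup>+x. uu x * ennreal K \<partial>lebesgue)" .
  have "seminorm_full_p s p v \<le> seminorm_delta_p \<delta> s p \<Omega> v + ennreal M * (ennreal K * (\<integral>\<^sup>+x\<in>\<Omega>. ennreal (\<bar>v x\<bar> powr p) \<partial>lebesgue)) + ennreal M * (ennreal K * (\<integral>\<^sup>+x\<in>\<Omega>. ennreal (\<bar>v x\<bar> powr p) \<partial>lebesgue))"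
  proof -
    have "ennreal M * (\<integral>\<^sup>+x. uu x * (\<integral>\<^sup>+y. hk x y \<partial>lebesgue) \<partial>lebesgue) \<le> ennreal M * (\<integral>\<^sup>+x. uu x * ennreal K \<partial>lebesgue)"
      by (rule mult_left_mono[OF A1]) simp
    moreover have "ennreal M * (\<integral>\<^sup>+x. (\<integral>\<^sup>+y. uu y * hk x y \<partial>lebesgue) \<partial>lebesgue) \<le> ennreal M * (\<integral>\<^sup>+x. uu x * ennreal K \<partial>lebesgue)"
      by (rule mult_left_mono[OF A2]) simp
    ultimately show ?thesis using main unfolding X[symmetric]
      by (smt (verit) add_mono order.refl order_trans)
  qed
  also have "\<dots> = seminorm_delta_p \<delta> s p \<Omega> v + ennreal (M * 2 * K) * (\<integral>\<^sup>+x\<in>\<Omega>. ennreal (\<bar>v x\<bar> powr p) \<partial>lebesgue)"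
  proof -
    have e: "ennreal (M * 2 * K) = ennreal M * 2 * ennreal K"
      using M0 K0 by (simp add: ennreal_mult)
    have "ennreal M * 2 * ennreal K * (\<integral>\<^sup>+x\<in>\<Omega>. ennreal (\<bar>v x\<bar> powr p) \<partial>lebesgue) = ennreal M * (ennreal K * (\<integral>\<^sup>+x\<in>\<Omega>. ennreal (\<bar>v x\<bar> powr p) \<partial>lebesgue)) + ennreal M * (ennreal K * (\<integral>\<^sup>+x\<in>\<Omega>. ennreal (\<bar>v x\<bar> powr p) \<partial>lebesgue))"
      by (simp only: mult_2_right distrib_right mult.assoc)
    then show ?thesis unfolding e by (simp only: add.assoc)
  qed
  finally show ?thesis by (simp add: M_def K_def)
qed



definition m0c :: "nat \<Rightarrow> real \<Rightarrow> real \<Rightarrow> real" where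
  "m0c n a D = (2*D) powr (-a) * (unit_ball_vol n * (2*D)^n - unit_ball_vol n * D^n)"

lemma m0c_pos: "D > 0 \<Longrightarrow> n > 0 \<Longrightarrow> m0c n a D > 0"
proof -
  assume D: "D > 0" and n: "n > 0"
  have "D^n < (2*D)^n" using D n by (intro power_strict_mono) auto
  then have "unit_ball_vol n * D^n < unit_ball_vol n * (2*D)^n" by simp
  then show ?thesis unfolding m0c_def using D by simp
qed

lemma poinc_large:
  fixes v :: "'a::euclidean_space \<Rightarrow> real" and \<Omega> :: "'a set"
  assumes vm[measurable]: "v \<in> borel_measurable lebesgue"
    and v0: "AE x in lebesgue. x \<notin> \<Omega> \<longrightarrow> v x = 0"
    and Om[measurable]: "\<Omega> \<in> sets lebesgue" and p: "p > 0" and q: "s * p > 0" and D: "D > 0"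
    and diam: "\<forall>x\<in>\<Omega>. \<forall>y\<in>\<Omega>. dist x y < D" and \<delta>D: "2*D \<le> \<delta>"
  shows "(\<integral>\<^sup>+x\<in>\<Omega>. ennreal (\<bar>v x\<bar> powr p) \<partial>lebesgue)
     \<le> ennreal (1 / m0c DIM('a) (real DIM('a) + s*p) D) * seminorm_delta_p \<delta> s p \<Omega> v"
proof -
  have \<delta>: "\<delta> > 0" using D \<delta>D by simp
  define \<alpha> where "\<alpha> = real DIM('a) + s*p"
  define m0 where "m0 = m0c DIM('a) \<alpha> D"
  have m0: "m0 > 0" unfolding m0_def using D by (intro m0c_pos) auto
  define vol where "vol = unit_ball_vol DIM('a)"
  define E where "E = nl_ext \<delta> \<Omega>"
  have Em[measurable]: "E \<in> sets lebesgue" unfolding E_def by (rule ext_leb[OF \<delta>])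
  define f where "f x y = ennreal (\<bar>v x - v y\<bar> powr p / dist x y powr \<alpha>)" for x y
  define P where "P = (\<integral>\<^sup>+x\<in>\<Omega>. ennreal (\<bar>v x\<bar> powr p) \<partial>lebesgue)"
  have pw: "ennreal (\<bar>v x\<bar> powr p) * indicator \<Omega> x * ennreal m0 \<le> (\<integral>\<^sup>+y. f x y * indicator (E \<inter> ball x \<delta>) y \<partial>lebesgue) * indicator E x" for x
  proof (cases "x \<in> \<Omega>")
    case False then show ?thesis by simp
  next
    case True
    then have xE: "x \<in> E" using sub_ext[OF \<delta>] by (auto simp: E_def)
    define Sh where "Sh = ball x (2*D) - ball x D"
    have Shm: "Sh \<in> sets lebesgue" unfolding Sh_def by simp
    have "emeasure lebesgue Sh = emeasure lebesgue (ball x (2*D)) - emeasure lebesgue (ball x D)"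
    proof -
      have fin: "emeasure lebesgue (ball x D) \<noteq> \<infinity>" using D by (subst emeasure_leb_ball) auto
      show ?thesis unfolding Sh_def using D by (intro emeasure_Diff[OF fin]) auto
    qed
    also have "\<dots> = ennreal (vol * (2*D)^DIM('a) - vol * D^DIM('a))"
      using D by (simp add: emeasure_ball vol_def ennreal_minus)
    finally have emSh: "emeasure lebesgue Sh = ennreal (vol * (2*D)^DIM('a) - vol * D^DIM('a))" .
    have "ennreal (\<bar>v x\<bar> powr p) * indicator \<Omega> x * ennreal m0 = ennreal (\<bar>v x\<bar> powr p * (2*D) powr (-\<alpha>)) * emeasure lebesgue Sh"
      using True D by (simp add: emSh m0_def m0c_def vol_def ennreal_mult[symmetric] mult.assoc)
    also have "\<dots> = (\<integral>\<^sup>+y. ennreal (\<bar>v x\<bar> powr p * (2*D) powr (-\<alpha>)) * indicator Sh y \<partial>lebesgue)"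
      using Shm by (simp add: nn_integral_cmult_indicator)
    also have "\<dots> \<le> (\<integral>\<^sup>+y. f x y * indicator (E \<inter> ball x \<delta>) y \<partial>lebesgue)"
    proof (rule nn_integral_mono_AE)
      show "AE y in lebesgue. ennreal (\<bar>v x\<bar> powr p * (2*D) powr (-\<alpha>)) * indicator Sh y \<le> f x y * indicator (E \<inter> ball x \<delta>) y"
        using v0
      proof eventually_elim
        case (elim y)
        show ?case
        proof (cases "y \<in> Sh")
          case False then show ?thesis by simp
        next
          case yS: True
          then have d1: "D \<le> dist x y" and d2: "dist x y < 2*D" by (auto simp: Sh_def)
          then have "y \<notin> \<Omega>" using diam True by force
          then have vy: "v y = 0" using elim by simp
          have yE: "y \<in> E \<inter> ball x \<delta>" using d2 \<delta>D ext_mem[OF \<delta> True, of y] by (auto simp: E_def)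
          have dpos: "dist x y > 0" using d1 D by linarith
          have "dist x y powr \<alpha> \<le> (2*D) powr \<alpha>"
            using d2 dpos q unfolding \<alpha>_def by (intro powr_mono2) auto
          then have "\<bar>v x\<bar> powr p * (2*D) powr (-\<alpha>) \<le> \<bar>v x\<bar> powr p / dist x y powr \<alpha>"
          proof -
            have "(2*D) powr (-\<alpha>) \<le> 1 / dist x y powr \<alpha>"
              unfolding powr_minus_divide using \<open>dist x y powr \<alpha> \<le> (2*D) powr \<alpha>\<close> dpos D
              by (intro divide_left_mono) auto
            then have "\<bar>v x\<bar> powr p * (2*D) powr (-\<alpha>) \<le> \<bar>v x\<bar> powr p * (1 / dist x y powr \<alpha>)"
              by (rule mult_left_mono) simp
            then show ?thesis by simp
          qed
          then show ?thesis using yS yE vy by (simp add: f_def ennreal_leI)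
        qed
      qed
    qed
    finally show ?thesis using xE by simp
  qed
  have "P * ennreal m0 = (\<integral>\<^sup>+x. ennreal (\<bar>v x\<bar> powr p) * indicator \<Omega> x * ennreal m0 \<partial>lebesgue)"
    unfolding P_def by (simp add: nn_integral_multc)
  also have "\<dots> \<le> (\<integral>\<^sup>+x. (\<integral>\<^sup>+y. f x y * indicator (E \<inter> ball x \<delta>) y \<partial>lebesgue) * indicator E x \<partial>lebesgue)"
    by (intro nn_integral_mono pw)
  also have "\<dots> = seminorm_delta_p \<delta> s p \<Omega> v"
    unfolding seminorm_delta_p_def E_def f_def \<alpha>_def by simp
  finally have le: "P * ennreal m0 \<le> seminorm_delta_p \<delta> s p \<Omega> v" .
  have "P = ennreal (1/m0) * (P * ennreal m0)"
    using m0 by (simp add: ennreal_mult[symmetric] mult.commute mult.left_commute flip: mult.assoc)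
  also have "\<dots> \<le> ennreal (1/m0) * seminorm_delta_p \<delta> s p \<Omega> v"
    by (rule mult_left_mono[OF le]) simp
  finally show ?thesis unfolding P_def m0_def \<alpha>_def .
qed




lemma delta_alt:
  "seminorm_delta_p \<delta> s p \<Omega> v = (\<integral>\<^sup>+x. (\<integral>\<^sup>+y. (if x \<in> nl_ext \<delta> \<Omega> \<and> y \<in> nl_ext \<delta> \<Omega> \<and> dist x y < \<delta> then
     ennreal (\<bar>v x - v y\<bar> powr p / dist x y powr (real DIM('a) + s * p)) else 0) \<partial>lebesgue) \<partial>lebesgue)"
  for v :: "'a::euclidean_space \<Rightarrow> real"
  unfolding seminorm_delta_p_def
  by (intro nn_integral_cong) (auto simp: nn_integral_multc indicator_def mem_ball intro!: nn_integral_cong)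

lemma ball_shift:
  fixes x z e :: "'a::euclidean_space"
  assumes e: "norm e = 1" and \<delta>: "\<delta> > 0" and z: "dist (x + (\<delta>/2) *\<^sub>R e) z < \<delta>/4"
  shows "dist x z < \<delta>" "0 < dist x z" "x \<bullet> e + \<delta>/4 < z \<bullet> e"
proof -
  define c where "c = x + (\<delta>/2) *\<^sub>R e"
  have dxc: "dist x c = \<delta>/2" using e \<delta> by (simp add: c_def dist_norm)
  have z': "dist c z < \<delta>/4" using z by (simp add: c_def)
  have "dist x z \<le> dist x c + dist c z" by (rule dist_triangle)
  then show "dist x z < \<delta>" using dxc z' \<delta> by linarith
  have "dist x c \<le> dist x z + dist z c" by (rule dist_triangle)
  then show "0 < dist x z" using dxc z' \<delta> dist_commute[of z c] by linarith
  have ee: "e \<bullet> e = 1" using e by (simp add: dot_square_norm)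
  have "\<bar>(z - c) \<bullet> e\<bar> \<le> norm (z - c) * norm e" by (rule Cauchy_Schwarz_ineq2)
  then have "\<bar>(z - c) \<bullet> e\<bar> < \<delta>/4" using e z' by (simp add: dist_norm norm_minus_commute)
  moreover have "z \<bullet> e = x \<bullet> e + \<delta>/2 + (z - c) \<bullet> e"
    using ee by (simp add: c_def inner_diff_left inner_add_left)
  ultimately show "x \<bullet> e + \<delta>/4 < z \<bullet> e" by linarith
qed


definition chc :: "nat \<Rightarrow> real \<Rightarrow> real \<Rightarrow> real \<Rightarrow> real \<Rightarrow> real" where
  "chc n a p \<delta> B = real (nat \<lceil>8*B/\<delta>\<rceil>) * (2 powr p)^(nat \<lceil>8*B/\<delta>\<rceil>) *
      (2 powr p * \<delta> powr a / (unit_ball_vol n * (\<delta>/4)^n))"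

lemma poinc_chain:
  fixes v :: "'a::euclidean_space \<Rightarrow> real" and \<Omega> :: "'a set"
  assumes vm[measurable]: "v \<in> borel_measurable lebesgue"
    and v0: "AE x in lebesgue. x \<notin> \<Omega> \<longrightarrow> v x = 0"
    and Om[measurable]: "\<Omega> \<in> sets lebesgue" and p: "p > 0" and q: "s * p > 0" and \<delta>: "\<delta> > 0"
    and B: "B > 0" and bnd: "\<forall>x\<in>\<Omega>. norm x < B"
  shows "(\<integral>\<^sup>+x\<in>\<Omega>. ennreal (\<bar>v x\<bar> powr p) \<partial>lebesgue)
     \<le> ennreal (chc DIM('a) (real DIM('a) + s*p) p \<delta> B) * seminorm_delta_p \<delta> s p \<Omega> v"
proof -
  define \<alpha> where "\<alpha> = real DIM('a) + s*p"
  have \<alpha>0: "\<alpha> \<ge> 0" using q by (simp add: \<alpha>_def)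
  define E where "E = nl_ext \<delta> \<Omega>"
  have Em[measurable]: "E \<in> sets lebesgue" unfolding E_def by (rule ext_leb[OF \<delta>])
  define f where "f x y = ennreal (\<bar>v x - v y\<bar> powr p / dist x y powr \<alpha>)" for x y :: 'a
  define g1 where "g1 x y = (if x \<in> E \<and> y \<in> E \<and> dist x y < \<delta> then f x y else 0)" for x y
  have g1m[measurable]: "(\<lambda>(x,y). g1 x y) \<in> borel_measurable (lebesgue \<Otimes>\<^sub>M lebesgue)"
    unfolding g1_def f_def by measurable
  have delta: "seminorm_delta_p \<delta> s p \<Omega> v = (\<integral>\<^sup>+x. (\<integral>\<^sup>+y. g1 x y \<partial>lebesgue) \<partial>lebesgue)"
    unfolding delta_alt g1_def f_def E_def \<alpha>_def ..
  obtain e :: 'a where e: "norm e = 1" using vector_choose_size[of 1] by auto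
  define Dk where "Dk k = {y. y \<in> E \<and> B - real k * \<delta>/4 < y \<bullet> e}" for k :: nat
  have Dkm[measurable]: "Dk k \<in> sets lebesgue" for k
    unfolding Dk_def by (rule leb_Collect) measurable
  define J where "J k = (\<integral>\<^sup>+y. ennreal (\<bar>v y\<bar> powr p) * indicator (Dk k) y \<partial>lebesgue)" for k
  define vol where "vol = unit_ball_vol DIM('a)"
  define Sv where "Sv = vol * (\<delta>/4)^DIM('a)"
  have Sv: "Sv > 0" using \<delta> by (simp add: Sv_def vol_def)
  define M where "M = (2::real) powr p"
  have M1: "M \<ge> 1" unfolding M_def using p by (intro ge_one_powr_ge_zero) auto
  define a0 where "a0 = M * \<delta> powr \<alpha> / Sv"
  have a0: "a0 \<ge> 0" using Sv M1 by (simp add: a0_def)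
  have a0Sv: "a0 * Sv = M * \<delta> powr \<alpha>" using Sv by (simp add: a0_def)
  define c where "c = (\<delta>/2) *\<^sub>R e"
  have inO: "x \<in> \<Omega> \<Longrightarrow> \<bar>x \<bullet> e\<bar> < B" for x
  proof -
    assume "x \<in> \<Omega>"
    have "\<bar>x \<bullet> e\<bar> \<le> norm x * norm e" by (rule Cauchy_Schwarz_ineq2)
    then show ?thesis using bnd \<open>x \<in> \<Omega>\<close> e by auto
  qed
  have step: "J (Suc k) \<le> ennreal a0 * seminorm_delta_p \<delta> s p \<Omega> v + ennreal M * J k" for k
  proof -
    define h where "h x z = (if dist (x + c) z < \<delta>/4 then ennreal (\<bar>v z\<bar> powr p) * indicator (Dk k) z else 0)" for x z :: 'a
    have hm[measurable]: "(\<lambda>(x,z). h x z) \<in> borel_measurable (lebesgue \<Otimes>\<^sub>M lebesgue)"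
      unfolding h_def by measurable
    have pw: "ennreal (\<bar>v x\<bar> powr p) * indicator (Dk (Suc k)) x * ennreal Sv
       \<le> ennreal (M * \<delta> powr \<alpha>) * (\<integral>\<^sup>+y. g1 x y \<partial>lebesgue) + ennreal M * (\<integral>\<^sup>+z. h x z \<partial>lebesgue)"
      if Px: "x \<notin> \<Omega> \<longrightarrow> v x = 0" for x
    proof (cases "x \<in> Dk (Suc k) \<and> x \<in> \<Omega>")
      case False
      then show ?thesis using Px p by (auto simp: indicator_def)
    next
      case True
      then have xD: "x \<in> Dk (Suc k)" and xO: "x \<in> \<Omega>" by auto
      have xE: "x \<in> E" using xD by (simp add: Dk_def)
      have "ennreal (\<bar>v x\<bar> powr p) * indicator (Dk (Suc k)) x * ennreal Sv
          = ennreal (\<bar>v x\<bar> powr p) * emeasure lebesgue (ball (x + c) (\<delta>/4))"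
        using xD \<delta> by (subst emeasure_leb_ball) (auto simp: Sv_def vol_def)
      also have "\<dots> = (\<integral>\<^sup>+z. ennreal (\<bar>v x\<bar> powr p) * indicator (ball (x + c) (\<delta>/4)) z \<partial>lebesgue)"
        by (simp add: nn_integral_cmult_indicator)
      also have "\<dots> \<le> (\<integral>\<^sup>+z. ennreal (M * \<delta> powr \<alpha>) * g1 x z + ennreal M * h x z \<partial>lebesgue)"
      proof (rule nn_integral_mono)
        fix z
        show "ennreal (\<bar>v x\<bar> powr p) * indicator (ball (x + c) (\<delta>/4)) z \<le> ennreal (M * \<delta> powr \<alpha>) * g1 x z + ennreal M * h x z"
        proof (cases "dist (x + c) z < \<delta>/4")
          case False
          then show ?thesis by (simp add: indicator_def mem_ball)
        next
          case True
          have sh: "dist x z < \<delta>" "0 < dist x z" "x \<bullet> e + \<delta>/4 < z \<bullet> e"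
            using ball_shift[OF e \<delta>, of x z] True by (simp_all add: c_def)
          have zE: "z \<in> E" using ext_mem[OF \<delta> xO sh(1)] by (simp add: E_def)
          have xe: "B - real (Suc k) * \<delta>/4 < x \<bullet> e" using xD by (simp add: Dk_def)
          have "real (Suc k) * \<delta>/4 = real k * \<delta>/4 + \<delta>/4" by (simp add: algebra_simps)
          then have "B - real k * \<delta>/4 < z \<bullet> e" using xe sh(3) by linarith
          then have zD: "z \<in> Dk k" using zE by (simp add: Dk_def)
          define F where "F = \<bar>v x - v z\<bar> powr p / dist x z powr \<alpha>"
          have F0: "F \<ge> 0" by (simp add: F_def)
          have g1v: "g1 x z = ennreal F" using xE zE sh by (simp add: g1_def f_def F_def)
          have hv: "h x z = ennreal (\<bar>v z\<bar> powr p)" using True zD by (simp add: h_def)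
          have dpos: "dist x z powr \<alpha> > 0" using sh by simp
          have "\<bar>v x - v z\<bar> powr p = dist x z powr \<alpha> * F" using dpos by (simp add: F_def)
          also have "\<dots> \<le> \<delta> powr \<alpha> * F"
            by (rule mult_right_mono[OF powr_mono2 F0]) (use \<alpha>0 sh in auto)
          finally have A: "\<bar>v x - v z\<bar> powr p \<le> \<delta> powr \<alpha> * F" .
          have "\<bar>v x\<bar> powr p = \<bar>(v x - v z) + v z\<bar> powr p" by simp
          also have "\<dots> \<le> M * (\<bar>v x - v z\<bar> powr p + \<bar>v z\<bar> powr p)"
            unfolding M_def by (rule powr_tri[OF p])
          also have "\<dots> \<le> M * (\<delta> powr \<alpha> * F + \<bar>v z\<bar> powr p)"
            using A M1 by (intro mult_left_mono) auto
          finally have B': "\<bar>v x\<bar> powr p \<le> (M * \<delta> powr \<alpha>) * F + M * \<bar>v z\<bar> powr p"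
            by (simp add: algebra_simps)
          have "ennreal (\<bar>v x\<bar> powr p) \<le> ennreal ((M * \<delta> powr \<alpha>) * F + M * \<bar>v z\<bar> powr p)"
            by (rule ennreal_leI[OF B'])
          also have "\<dots> = ennreal (M * \<delta> powr \<alpha>) * g1 x z + ennreal M * h x z"
            unfolding g1v hv using M1 F0 by (simp add: ennreal_plus ennreal_mult)
          finally show ?thesis using True by (simp add: indicator_def mem_ball)
        qed
      qed
      also have "\<dots> = ennreal (M * \<delta> powr \<alpha>) * (\<integral>\<^sup>+y. g1 x y \<partial>lebesgue) + ennreal M * (\<integral>\<^sup>+z. h x z \<partial>lebesgue)"
        by (simp add: nn_integral_add nn_integral_cmult)
      finally show ?thesis .
    qed
    have "J (Suc k) * ennreal Sv = (\<integral>\<^sup>+x. ennreal (\<bar>v x\<bar> powr p) * indicator (Dk (Suc k)) x * ennreal Sv \<partial>lebesgue)"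
      unfolding J_def by (simp add: nn_integral_multc)
    also have "\<dots> \<le> (\<integral>\<^sup>+x. ennreal (M * \<delta> powr \<alpha>) * (\<integral>\<^sup>+y. g1 x y \<partial>lebesgue) + ennreal M * (\<integral>\<^sup>+z. h x z \<partial>lebesgue) \<partial>lebesgue)"
      by (rule nn_integral_mono_AE, rule AE_mp[OF v0], rule AE_I2, rule impI, rule pw)
    also have "\<dots> = ennreal (M * \<delta> powr \<alpha>) * seminorm_delta_p \<delta> s p \<Omega> v + ennreal M * (\<integral>\<^sup>+x. (\<integral>\<^sup>+z. h x z \<partial>lebesgue) \<partial>lebesgue)"
      unfolding delta by (simp add: nn_integral_add nn_integral_cmult)
    also have "(\<integral>\<^sup>+x. (\<integral>\<^sup>+z. h x z \<partial>lebesgue) \<partial>lebesgue) = (\<integral>\<^sup>+z. (\<integral>\<^sup>+x. h x z \<partial>lebesgue) \<partial>lebesgue)"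
      by (rule leb2.Fubini'[symmetric]) measurable
    also have "\<dots> = (\<integral>\<^sup>+z. ennreal (\<bar>v z\<bar> powr p) * indicator (Dk k) z * ennreal Sv \<partial>lebesgue)"
    proof (rule nn_integral_cong)
      fix z :: 'a
      have "(\<integral>\<^sup>+x. h x z \<partial>lebesgue) = (\<integral>\<^sup>+x. (ennreal (\<bar>v z\<bar> powr p) * indicator (Dk k) z) * indicator (ball (z - c) (\<delta>/4)) x \<partial>lebesgue)"
      proof (rule nn_integral_cong)
        fix x :: 'a
        have "dist (x + c) z = dist (z - c) x" by (simp add: dist_norm algebra_simps norm_minus_commute)
        then show "h x z = (ennreal (\<bar>v z\<bar> powr p) * indicator (Dk k) z) * indicator (ball (z - c) (\<delta>/4)) x"
          by (simp add: h_def indicator_def mem_ball)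
      qed
      also have "\<dots> = ennreal (\<bar>v z\<bar> powr p) * indicator (Dk k) z * ennreal Sv"
        using \<delta> by (simp add: nn_integral_cmult_indicator emeasure_ball Sv_def vol_def)
      finally show "(\<integral>\<^sup>+x. h x z \<partial>lebesgue) = ennreal (\<bar>v z\<bar> powr p) * indicator (Dk k) z * ennreal Sv" .
    qed
    also have "\<dots> = J k * ennreal Sv"
      unfolding J_def by (simp add: nn_integral_multc)
    finally have le: "J (Suc k) * ennreal Sv \<le> ennreal (M * \<delta> powr \<alpha>) * seminorm_delta_p \<delta> s p \<Omega> v + ennreal M * (J k * ennreal Sv)" .
    have "ennreal (M * \<delta> powr \<alpha>) * seminorm_delta_p \<delta> s p \<Omega> v + ennreal M * (J k * ennreal Sv)
        = ennreal Sv * (ennreal a0 * seminorm_delta_p \<delta> s p \<Omega> v + ennreal M * J k)"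
      using Sv a0 by (simp add: a0Sv[symmetric] ennreal_mult distrib_left ac_simps)
    with le have "ennreal Sv * J (Suc k) \<le> ennreal Sv * (ennreal a0 * seminorm_delta_p \<delta> s p \<Omega> v + ennreal M * J k)"
      by (simp add: mult.commute)
    then show ?thesis using Sv by (subst (asm) ennreal_mult_le_mult_iff) auto
  qed
  have ae0: "AE y in lebesgue. ennreal (\<bar>v y\<bar> powr p) * indicator (Dk 0) y = 0"
    using v0
  proof eventually_elim
    case (elim y)
    show ?case
    proof (cases "y \<in> Dk 0")
      case True
      then have "y \<notin> \<Omega>" using inO[of y] by (auto simp: Dk_def)
      then show ?thesis using elim by simp
    qed simp
  qed
  have J0: "J 0 = 0"
  proof -
    have m: "(\<lambda>y. ennreal (\<bar>v y\<bar> powr p) * indicator (Dk 0) y) \<in> borel_measurable lebesgue"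
      by measurable
    show ?thesis using nn_integral_0_iff_AE[OF m] ae0 unfolding J_def by simp
  qed
  have ind: "J k \<le> ennreal (real k * M^k * a0) * seminorm_delta_p \<delta> s p \<Omega> v" for k
  proof (induction k)
    case 0 then show ?case by (simp add: J0)
  next
    case (Suc k)
    have "J (Suc k) \<le> ennreal a0 * seminorm_delta_p \<delta> s p \<Omega> v + ennreal M * J k" by (rule step)
    also have "\<dots> \<le> ennreal a0 * seminorm_delta_p \<delta> s p \<Omega> v + ennreal M * (ennreal (real k * M^k * a0) * seminorm_delta_p \<delta> s p \<Omega> v)"
      by (intro add_left_mono mult_left_mono Suc.IH) simp
    also have "\<dots> = ennreal (a0 + M * (real k * M^k * a0)) * seminorm_delta_p \<delta> s p \<Omega> v"
      using M1 a0 by (simp add: ennreal_plus ennreal_mult distrib_right mult.assoc)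
    also have "\<dots> \<le> ennreal (real (Suc k) * M^(Suc k) * a0) * seminorm_delta_p \<delta> s p \<Omega> v"
    proof (intro mult_right_mono ennreal_leI)
      have "1 \<le> M^(Suc k)" by (rule one_le_power[OF M1])
      then have "1 * a0 \<le> M^(Suc k) * a0" using a0 by (rule mult_right_mono)
      then have "a0 \<le> M^(Suc k) * a0" by simp
      then show "a0 + M * (real k * M^k * a0) \<le> real (Suc k) * M^(Suc k) * a0"
        by (simp add: algebra_simps)
    qed simp
    finally show ?case .
  qed
  define K where "K = nat \<lceil>8*B/\<delta>\<rceil>"
  have sub: "\<Omega> \<subseteq> Dk K"
  proof
    fix x assume xO: "x \<in> \<Omega>"
    have "8*B/\<delta> \<le> real K" unfolding K_def by linarith
    then have "2*B \<le> real K * \<delta>/4" using \<delta> by (simp add: field_simps)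
    then show "x \<in> Dk K" using inO[OF xO] xO sub_ext[OF \<delta>, of \<Omega>] by (auto simp: Dk_def E_def)
  qed
  have "(\<integral>\<^sup>+x\<in>\<Omega>. ennreal (\<bar>v x\<bar> powr p) \<partial>lebesgue) \<le> J K"
    unfolding J_def using sub by (intro nn_integral_mono mult_left_mono) (auto simp: indicator_def)
  also have "\<dots> \<le> ennreal (real K * M^K * a0) * seminorm_delta_p \<delta> s p \<Omega> v" by (rule ind)
  finally show ?thesis
    by (simp add: chc_def K_def M_def a0_def Sv_def vol_def \<alpha>_def)
qed




lemma chc_nonneg: "\<delta> > 0 \<Longrightarrow> chc n a p \<delta> B \<ge> 0"
  unfolding chc_def by (intro mult_nonneg_nonneg divide_nonneg_nonneg) auto

lemma delta_le_full: "seminorm_delta_p \<delta> s p \<Omega> v \<le> seminorm_full_p s p v"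
  unfolding seminorm_delta_p_def seminorm_full_p_def
proof (intro nn_integral_mono)
  fix x
  let ?g = "\<lambda>y. ennreal (\<bar>v x - v y\<bar> powr p / dist x y powr (real DIM('a) + s * p))"
  have "(\<integral>\<^sup>+y\<in>nl_ext \<delta> \<Omega> \<inter> ball x \<delta>. ?g y \<partial>lebesgue) * indicator (nl_ext \<delta> \<Omega>) x \<le> (\<integral>\<^sup>+y\<in>nl_ext \<delta> \<Omega> \<inter> ball x \<delta>. ?g y \<partial>lebesgue)"
    by (auto simp: indicator_def)
  also have "\<dots> \<le> (\<integral>\<^sup>+y. ?g y \<partial>lebesgue)"
    by (intro nn_integral_mono) (auto simp: indicator_def)
  finally show "(\<integral>\<^sup>+y\<in>nl_ext \<delta> \<Omega> \<inter> ball x \<delta>. ?g y \<partial>lebesgue) * indicator (nl_ext \<delta> \<Omega>) x \<le> (\<integral>\<^sup>+y. ?g y \<partial>lebesgue)" .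
qed

lemma delta_cong:
  assumes "\<forall>x\<in>nl_ext \<delta> \<Omega>. u x = w x"
  shows "seminorm_delta_p \<delta> s p \<Omega> u = seminorm_delta_p \<delta> s p \<Omega> w"
  unfolding seminorm_delta_p_def using assms
  by (intro nn_integral_cong) (auto simp: indicator_def intro!: nn_integral_cong)


theorem lemma2p3:
  fixes \<Omega> :: "'a::euclidean_space set" and s p :: real
  assumes "lipschitz_domain \<Omega>" and "0 < s" "s < 1" and "1 < p"
  shows "\<exists>C :: real \<Rightarrow> real.
     (\<forall>\<delta>>0. C \<delta> > 1 \<and>
        (\<forall>v\<in>X0_infty s p \<Omega>. restrict v (nl_ext \<delta> \<Omega>) \<in> X0_delta \<delta> s p \<Omega>) \<and>
        (\<forall>u\<in>X0_delta \<delta> s p \<Omega>. zero_ext \<delta> \<Omega> u \<in> X0_infty s p \<Omega>) \<and>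
        (\<forall>v::'a \<Rightarrow> real. v \<in> borel_measurable lebesgue \<longrightarrow>
            (AE x in lebesgue. x \<notin> \<Omega> \<longrightarrow> v x = 0) \<longrightarrow>
            seminorm_delta_p \<delta> s p \<Omega> v \<le> seminorm_full_p s p v \<and>
            seminorm_full_p s p v \<le> ennreal (C \<delta> powr p) * seminorm_delta_p \<delta> s p \<Omega> v)) \<and>
     (C \<longlongrightarrow> 1) at_top"
proof -
  have bdd: "bounded \<Omega>" and opn: "open \<Omega>"
    using assms(1) by (auto simp: lipschitz_domain_def)
  have Om[measurable]: "\<Omega> \<in> sets lebesgue" using opn by (rule open_leb)
  have p: "p > 0" using assms by simp
  have q: "s * p > 0" using assms by simp
  obtain B0 where B0: "B0 > 0" "\<forall>x\<in>\<Omega>. norm x \<le> B0" using bdd by (auto simp: bounded_pos)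
  define B where "B = B0 + 1"
  have B: "B > 0" and bnd: "\<forall>x\<in>\<Omega>. norm x < B" using B0 by (auto simp: B_def)
  define D where "D = 2 * B"
  have D: "D > 0" using B by (simp add: D_def)
  have diam: "\<forall>x\<in>\<Omega>. \<forall>y\<in>\<Omega>. dist x y < D"
  proof (intro ballI)
    fix x y assume "x \<in> \<Omega>" "y \<in> \<Omega>"
    then have "norm x < B" "norm y < B" using bnd by auto
    moreover have "dist x y \<le> norm x + norm y" by (simp add: dist_norm norm_triangle_ineq4)
    ultimately show "dist x y < D" by (simp add: D_def)
  qed
  define N where "N = DIM('a)"
  define \<alpha> where "\<alpha> = real N + s * p"
  define m0 where "m0 = m0c N \<alpha> D"
  have m0: "m0 > 0" unfolding m0_def N_def using D by (intro m0c_pos) auto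
  define K where "K \<delta> = (if 2 * D \<le> \<delta> then 1 / m0 else chc N \<alpha> p \<delta> B)" for \<delta>
  define A where "A \<delta> = 2 powr p * 2 * shc N (s * p) \<delta>" for \<delta>
  define R where "R \<delta> = A \<delta> * K \<delta> + 1 / \<delta>" for \<delta>
  define C where "C \<delta> = (1 + R \<delta>) powr (1 / p)" for \<delta>
  have K0: "K \<delta> \<ge> 0" if "\<delta> > 0" for \<delta> using m0 chc_nonneg[OF that] by (simp add: K_def)
  have A0: "A \<delta> \<ge> 0" for \<delta> using shc_nonneg[OF q] by (simp add: A_def)
  have R0: "R \<delta> > 0" if "\<delta> > 0" for \<delta>
  proof -
    have "A \<delta> * K \<delta> \<ge> 0" using K0[OF that] A0[of \<delta>] by simp
    moreover have "1 / \<delta> > 0" using that by simp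
    ultimately show ?thesis unfolding R_def by linarith
  qed
  have C1: "C \<delta> > 1" if "\<delta> > 0" for \<delta>
    unfolding C_def using R0[OF that] p by (intro gr_one_powr) auto
  have Cp: "C \<delta> powr p = 1 + R \<delta>" if "\<delta> > 0" for \<delta>
    unfolding C_def using R0[OF that] p by (simp add: powr_powr)
  have bound: "seminorm_full_p s p v \<le> ennreal (C \<delta> powr p) * seminorm_delta_p \<delta> s p \<Omega> v"
    if \<delta>: "\<delta> > 0" and vm[measurable]: "v \<in> borel_measurable lebesgue"
      and v0: "AE x in lebesgue. x \<notin> \<Omega> \<longrightarrow> v x = 0" for \<delta> v
  proof -
    let ?d = "seminorm_delta_p \<delta> s p \<Omega> v"
    let ?P = "\<integral>\<^sup>+x\<in>\<Omega>. ennreal (\<bar>v x\<bar> powr p) \<partial>lebesgue"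
    have P: "?P \<le> ennreal (K \<delta>) * ?d"
    proof (cases "2 * D \<le> \<delta>")
      case True
      then show ?thesis using poinc_large[OF vm v0 Om p q D diam True]
        by (simp add: K_def m0_def N_def \<alpha>_def)
    next
      case False
      then show ?thesis using poinc_chain[OF vm v0 Om p q \<delta> B bnd]
        by (simp add: K_def N_def \<alpha>_def)
    qed
    have "seminorm_full_p s p v \<le> ?d + ennreal (A \<delta>) * ?P"
      using full_le[OF vm v0 Om \<delta> p q] by (simp add: A_def N_def)
    also have "\<dots> \<le> ?d + ennreal (A \<delta>) * (ennreal (K \<delta>) * ?d)"
      by (intro add_left_mono mult_left_mono P) simp
    also have "\<dots> = ennreal (1 + A \<delta> * K \<delta>) * ?d"
      using A0[of \<delta>] K0[OF \<delta>] by (simp add: ennreal_plus ennreal_mult distrib_right mult.assoc)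
    also have "\<dots> \<le> ennreal (C \<delta> powr p) * ?d"
      using Cp[OF \<delta>] \<delta> by (intro mult_right_mono ennreal_leI) (auto simp: R_def)
    finally show ?thesis .
  qed
  have lim: "(C \<longlongrightarrow> 1) at_top"
  proof -
    have shc0: "((\<lambda>\<delta>. shc N (s * p) \<delta>) \<longlongrightarrow> 0) at_top"
    proof -
      have "((\<lambda>\<delta>. unit_ball_vol N * 2^N * \<delta> powr (-(s*p)) / (1 - 2 powr (-(s*p)))) \<longlongrightarrow>
          unit_ball_vol N * 2^N * 0 / (1 - 2 powr (-(s*p)))) at_top"
        by (intro tendsto_intros tendsto_neg_powr filterlim_ident) (use q in auto)
      then show ?thesis by (simp add: shc_def)
    qed
    have "((\<lambda>\<delta>. 2 powr p * 2 * shc N (s * p) \<delta> * (1 / m0) + inverse \<delta>) \<longlongrightarrow> 2 powr p * 2 * 0 * (1 / m0) + 0) at_top"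
      by (intro tendsto_intros shc0 tendsto_inverse_0_at_top filterlim_ident)
    then have R1: "((\<lambda>\<delta>. 2 powr p * 2 * shc N (s * p) \<delta> * (1 / m0) + inverse \<delta>) \<longlongrightarrow> 0) at_top" by simp
    have ev: "eventually (\<lambda>\<delta>. 2 powr p * 2 * shc N (s * p) \<delta> * (1 / m0) + inverse \<delta> = R \<delta>) at_top"
      using eventually_ge_at_top[of "2 * D"]
      by eventually_elim (simp add: R_def A_def K_def divide_inverse)
    have R2: "(R \<longlongrightarrow> 0) at_top" using Lim_transform_eventually[OF R1 ev] by simp
    have "((\<lambda>\<delta>. (1 + R \<delta>) powr (1 / p)) \<longlongrightarrow> (1 + 0) powr (1 / p)) at_top"
      by (intro tendsto_intros R2) auto
    then show ?thesis by (simp add: C_def[abs_def])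
  qed
  have M1: "restrict v (nl_ext \<delta> \<Omega>) \<in> X0_delta \<delta> s p \<Omega>" if \<delta>: "\<delta> > 0" and v: "v \<in> X0_infty s p \<Omega>" for \<delta> v
  proof -
    have Em[measurable]: "nl_ext \<delta> \<Omega> \<in> sets lebesgue" by (rule ext_leb[OF \<delta>])
    have OE: "\<Omega> \<subseteq> nl_ext \<delta> \<Omega>" by (rule sub_ext[OF \<delta>])
    have vm[measurable]: "v \<in> borel_measurable lebesgue" and vL: "(\<integral>\<^sup>+x\<in>\<Omega>. ennreal (\<bar>v x\<bar> powr p) \<partial>lebesgue) < \<infinity>"
      and vf: "seminorm_full_p s p v < \<infinity>" and v0: "AE x in lebesgue. x \<notin> \<Omega> \<longrightarrow> v x = 0"
      using v by (auto simp: X0_infty_def)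
    let ?w = "restrict v (nl_ext \<delta> \<Omega>)"
    have wm: "?w \<in> borel_measurable lebesgue" unfolding restrict_def by measurable
    have "(\<integral>\<^sup>+x\<in>nl_ext \<delta> \<Omega>. ennreal (\<bar>?w x\<bar> powr p) \<partial>lebesgue) = (\<integral>\<^sup>+x\<in>\<Omega>. ennreal (\<bar>v x\<bar> powr p) \<partial>lebesgue)"
    proof (rule nn_integral_cong_AE)
      show "AE x in lebesgue. ennreal (\<bar>?w x\<bar> powr p) * indicator (nl_ext \<delta> \<Omega>) x = ennreal (\<bar>v x\<bar> powr p) * indicator \<Omega> x"
        using v0
      proof eventually_elim
        case (elim x)
        then show ?case using OE p by (cases "x \<in> \<Omega>"; cases "x \<in> nl_ext \<delta> \<Omega>") (auto simp: indicator_def)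
      qed
    qed
    then have wL: "(\<integral>\<^sup>+x\<in>nl_ext \<delta> \<Omega>. ennreal (\<bar>?w x\<bar> powr p) \<partial>lebesgue) < \<infinity>" using vL by simp
    have "seminorm_delta_p \<delta> s p \<Omega> ?w = seminorm_delta_p \<delta> s p \<Omega> v" by (rule delta_cong) simp
    also have "\<dots> \<le> seminorm_full_p s p v" by (rule delta_le_full)
    finally have wd: "seminorm_delta_p \<delta> s p \<Omega> ?w < \<infinity>" using vf by (simp add: order_le_less_trans)
    have wc: "AE x in lebesgue. x \<in> nl_collar \<delta> \<Omega> \<longrightarrow> ?w x = 0"
      using v0 by eventually_elim (auto simp: nl_collar_def nl_ext_def)
    show ?thesis unfolding X0_delta_def using wm wL wd wc by blast
  qed
  have M2: "zero_ext \<delta> \<Omega> u \<in> X0_infty s p \<Omega>" if \<delta>: "\<delta> > 0" and u: "u \<in> X0_delta \<delta> s p \<Omega>" for \<delta> u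
  proof -
    have Em[measurable]: "nl_ext \<delta> \<Omega> \<in> sets lebesgue" by (rule ext_leb[OF \<delta>])
    have OE: "\<Omega> \<subseteq> nl_ext \<delta> \<Omega>" by (rule sub_ext[OF \<delta>])
    have um[measurable]: "u \<in> borel_measurable lebesgue" and uL: "(\<integral>\<^sup>+x\<in>nl_ext \<delta> \<Omega>. ennreal (\<bar>u x\<bar> powr p) \<partial>lebesgue) < \<infinity>"
      and ud: "seminorm_delta_p \<delta> s p \<Omega> u < \<infinity>" and uc: "AE x in lebesgue. x \<in> nl_collar \<delta> \<Omega> \<longrightarrow> u x = 0"
      using u by (auto simp: X0_delta_def)
    let ?w = "zero_ext \<delta> \<Omega> u"
    have wm[measurable]: "?w \<in> borel_measurable lebesgue" unfolding zero_ext_def by measurable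
    have "(\<integral>\<^sup>+x\<in>\<Omega>. ennreal (\<bar>?w x\<bar> powr p) \<partial>lebesgue) \<le> (\<integral>\<^sup>+x\<in>nl_ext \<delta> \<Omega>. ennreal (\<bar>u x\<bar> powr p) \<partial>lebesgue)"
      using OE by (intro nn_integral_mono) (auto simp: indicator_def zero_ext_def)
    then have wL: "(\<integral>\<^sup>+x\<in>\<Omega>. ennreal (\<bar>?w x\<bar> powr p) \<partial>lebesgue) < \<infinity>" using uL by (simp add: le_less_trans)
    have w0: "AE x in lebesgue. x \<notin> \<Omega> \<longrightarrow> ?w x = 0"
      using uc by eventually_elim (auto simp: zero_ext_def nl_collar_def nl_ext_def)
    have dd: "seminorm_delta_p \<delta> s p \<Omega> ?w = seminorm_delta_p \<delta> s p \<Omega> u" by (rule delta_cong) (simp add: zero_ext_def)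
    have "seminorm_full_p s p ?w \<le> ennreal (C \<delta> powr p) * seminorm_delta_p \<delta> s p \<Omega> ?w"
      by (rule bound[OF \<delta> wm w0])
    also have "\<dots> < \<infinity>" using ud unfolding dd by (simp add: ennreal_mult_less_top)
    finally have wf: "seminorm_full_p s p ?w < \<infinity>" .
    show ?thesis unfolding X0_infty_def using wm wL wf w0 by blast
  qed
  show ?thesis
    apply (rule exI[of _ C])
    using C1 M1 M2 bound delta_le_full lim by blast
qed


end
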